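(* Let $G=(V,E)$ be a graph and $W$ a vertex cover of $G$. Let $\Omega$ be a potential maximal clique of $G$ having an active separator $S\subseteq\Omega$ with an active pair $x,y\in S$. Let $C$ be the unique connected component of $G-S$ intersecting $\Omega$, and let $D_S$ be the union of all other connected components of $G-S$. Let $D_x$ be the union of those components of $G-\Omega$ that are contained in $C$ and contain a neighbor of $x$, and let $D_y$ be the union of those components of $G-\Omega$ that are contained in $C$ and contain no neighbor of $x$. Put $D_S^W=D_S\cap W$, $D_x^W=D_x\cap W$, $D_y^W=D_y\cap W$. Then at least one of the following holds: (1) there is a vertex $t\in\Omega$ with $\Omega\setminus S=N(t)\cap C$; (2) there is a vertex $t\in\Omega$ with $\Omega=N[t]$; (3) for every vertex $z\notin W$, we have $z\in\Omega$ if and only if either (a) $N(z)$ intersects $D_S^W$ and intersects $D_x^W\cup D_y^W$, or (b) $N(z)$ does not intersect $D_S^W$, but $N(z)$ intersects each of $D_x^W\cup\{x\}$, $D_y^W\cup\{y\}$ and $D_x^W\cup D_y^W$.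
   Context: All graphs are finite, simple and undirected; $N(t)$ is the open neighborhood, $N[t]=N(t)\cup\{t\}$, and for a set $X$, $N(X)=\bigcup_{v\in X}N(v)\setminus X$. A vertex cover is a set of vertices meeting every edge. A minimal separator of $G$ is a set $S$ that is, for some vertices $u,v$, an inclusion-minimal set whose removal puts $u,v$ in different connected components. A graph is chordal if every cycle of length at least 4 has a chord; a minimal triangulation of $G$ is a chordal supergraph $H$ on the same vertex set such that no proper subset of $E(H)$ containing $E(G)$ gives a chordal graph. A set $\Omega\subseteq V$ is a potential maximal clique of $G$ if it is a maximal clique of some minimal triangulation of $G$. (Equivalently: letting $C_1,\dots,C_p$ be the components of $G-\Omega$ and $S_i=N(C_i)$, each $S_i$ is a proper subset of $\Omega$, and any two non-adjacent vertices of $\Omega$ both have neighbors in some common $C_i$; in that case the $S_i$ are exactly the minimal separators of $G$ contained in $\Omega$, and for each such $S_i$ the set $\Omega\setminus S_i$ lies in a unique component of $G-S_i$.) Active separator: let $\Omega$ be a potential maximal clique, $C_1,\dots,C_p$ the components of $G-\Omega$ and $S_i=N(C_i)$. Let $G^+$ be obtained from $G$ by making a clique of every $S_j$ ($2\le j\le p$) with $S_j\not\subseteq S_1$. Then $S_1$ is an active separator for $\Omega$ if $\Omega$ is not a clique of $G^+$, and a pair $x,y\in\Omega$ non-adjacent in $G^+$ is an active pair (necessarily $x,y\in S_1$). $\Omega$ has an active separator if some $S_i$ is active for $\Omega$ (with the roles of indices permuted). *)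

theory Defs
  imports Main
begin

definition graph :: "'a set \<Rightarrow> ('a \<Rightarrow> 'a \<Rightarrow> bool) \<Rightarrow> bool" where
  "graph V adj \<longleftrightarrow> finite V \<and> (\<forall>x y. adj x y \<longrightarrow> adj y x)
     \<and> (\<forall>x. \<not> adj x x) \<and> (\<forall>x y. adj x y \<longrightarrow> x \<in> V \<and> y \<in> V)"

definition nbh :: "'a set \<Rightarrow> ('a \<Rightarrow> 'a \<Rightarrow> bool) \<Rightarrow> 'a \<Rightarrow> 'a set" where
  "nbh V adj v = {u \<in> V. adj v u}"

definition cnbh :: "'a set \<Rightarrow> ('a \<Rightarrow> 'a \<Rightarrow> bool) \<Rightarrow> 'a \<Rightarrow> 'a set" where
  "cnbh V adj v = insert v (nbh V adj v)"

definition setnbh :: "'a set \<Rightarrow> ('a \<Rightarrow> 'a \<Rightarrow> bool) \<Rightarrow> 'a set \<Rightarrow> 'a set" where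
  "setnbh V adj X = (\<Union>v\<in>X. nbh V adj v) - X"

definition vertex_cover :: "'a set \<Rightarrow> ('a \<Rightarrow> 'a \<Rightarrow> bool) \<Rightarrow> 'a set \<Rightarrow> bool" where
  "vertex_cover V adj W \<longleftrightarrow> W \<subseteq> V \<and> (\<forall>x y. adj x y \<longrightarrow> x \<in> W \<or> y \<in> W)"

definition reach_in :: "('a \<Rightarrow> 'a \<Rightarrow> bool) \<Rightarrow> 'a set \<Rightarrow> 'a \<Rightarrow> 'a \<Rightarrow> bool" where
  "reach_in adj A u v \<longleftrightarrow> u \<in> A \<and> (\<lambda>x y. adj x y \<and> x \<in> A \<and> y \<in> A)\<^sup>*\<^sup>* u v"

text \<open>Connected components of the induced subgraph on A (G - X is A = V - X).\<close>
definition components_in :: "('a \<Rightarrow> 'a \<Rightarrow> bool) \<Rightarrow> 'a set \<Rightarrow> 'a set set" where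
  "components_in adj A = {{v. reach_in adj A u v} | u. u \<in> A}"

definition separates :: "'a set \<Rightarrow> ('a \<Rightarrow> 'a \<Rightarrow> bool) \<Rightarrow> 'a set \<Rightarrow> 'a \<Rightarrow> 'a \<Rightarrow> bool" where
  "separates V adj S u v \<longleftrightarrow> u \<in> V - S \<and> v \<in> V - S \<and> \<not> reach_in adj (V - S) u v"

definition minimal_separator :: "'a set \<Rightarrow> ('a \<Rightarrow> 'a \<Rightarrow> bool) \<Rightarrow> 'a set \<Rightarrow> bool" where
  "minimal_separator V adj S \<longleftrightarrow> S \<subseteq> V \<and> (\<exists>u v. separates V adj S u v
      \<and> (\<forall>T. T \<subset> S \<longrightarrow> \<not> separates V adj T u v))"

definition is_cycle :: "('a \<Rightarrow> 'a \<Rightarrow> bool) \<Rightarrow> 'a list \<Rightarrow> bool" where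
  "is_cycle adj vs \<longleftrightarrow> distinct vs \<and> length vs \<ge> 3 \<and>
     (\<forall>i < length vs. adj (vs ! i) (vs ! ((i + 1) mod length vs)))"

definition has_chord :: "('a \<Rightarrow> 'a \<Rightarrow> bool) \<Rightarrow> 'a list \<Rightarrow> bool" where
  "has_chord adj vs \<longleftrightarrow> (\<exists>i j. i < length vs \<and> j < length vs \<and> i \<noteq> j
     \<and> j \<noteq> (i + 1) mod length vs \<and> i \<noteq> (j + 1) mod length vs
     \<and> adj (vs ! i) (vs ! j))"

definition chordal :: "'a set \<Rightarrow> ('a \<Rightarrow> 'a \<Rightarrow> bool) \<Rightarrow> bool" where
  "chordal V adj \<longleftrightarrow> (\<forall>vs. set vs \<subseteq> V \<longrightarrow> is_cycle adj vs \<longrightarrow> length vs \<ge> 4 \<longrightarrow> has_chord adj vs)"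

definition minimal_triangulation :: "'a set \<Rightarrow> ('a \<Rightarrow> 'a \<Rightarrow> bool) \<Rightarrow> ('a \<Rightarrow> 'a \<Rightarrow> bool) \<Rightarrow> bool" where
  "minimal_triangulation V adj h \<longleftrightarrow> graph V h \<and> adj \<le> h \<and> chordal V h
     \<and> (\<forall>f. graph V f \<longrightarrow> adj \<le> f \<longrightarrow> f < h \<longrightarrow> \<not> chordal V f)"

definition is_clique :: "('a \<Rightarrow> 'a \<Rightarrow> bool) \<Rightarrow> 'a set \<Rightarrow> bool" where
  "is_clique adj K \<longleftrightarrow> (\<forall>x\<in>K. \<forall>y\<in>K. x \<noteq> y \<longrightarrow> adj x y)"

definition maximal_clique :: "'a set \<Rightarrow> ('a \<Rightarrow> 'a \<Rightarrow> bool) \<Rightarrow> 'a set \<Rightarrow> bool" where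
  "maximal_clique V adj K \<longleftrightarrow> K \<subseteq> V \<and> is_clique adj K
     \<and> (\<forall>K'. K \<subset> K' \<longrightarrow> K' \<subseteq> V \<longrightarrow> \<not> is_clique adj K')"

definition potential_maximal_clique :: "'a set \<Rightarrow> ('a \<Rightarrow> 'a \<Rightarrow> bool) \<Rightarrow> 'a set \<Rightarrow> bool" where
  "potential_maximal_clique V adj \<Omega> \<longleftrightarrow>
     (\<exists>h. minimal_triangulation V adj h \<and> maximal_clique V h \<Omega>)"

definition gplus :: "'a set \<Rightarrow> ('a \<Rightarrow> 'a \<Rightarrow> bool) \<Rightarrow> 'a set \<Rightarrow> 'a set \<Rightarrow> 'a \<Rightarrow> 'a \<Rightarrow> bool" where
  "gplus V adj \<Omega> S x y \<longleftrightarrow> adj x y \<or> (x \<noteq> y \<and> (\<exists>C' \<in> components_in adj (V - \<Omega>).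
      \<not> setnbh V adj C' \<subseteq> S \<and> x \<in> setnbh V adj C' \<and> y \<in> setnbh V adj C'))"

definition active_separator :: "'a set \<Rightarrow> ('a \<Rightarrow> 'a \<Rightarrow> bool) \<Rightarrow> 'a set \<Rightarrow> 'a set \<Rightarrow> bool" where
  "active_separator V adj \<Omega> S \<longleftrightarrow> potential_maximal_clique V adj \<Omega>
     \<and> (\<exists>C1 \<in> components_in adj (V - \<Omega>). S = setnbh V adj C1)
     \<and> \<not> is_clique (gplus V adj \<Omega> S) \<Omega>"

definition active_pair :: "'a set \<Rightarrow> ('a \<Rightarrow> 'a \<Rightarrow> bool) \<Rightarrow> 'a set \<Rightarrow> 'a set \<Rightarrow> 'a \<Rightarrow> 'a \<Rightarrow> bool" where
  "active_pair V adj \<Omega> S x y \<longleftrightarrow> active_separator V adj \<Omega> S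
     \<and> x \<in> \<Omega> \<and> y \<in> \<Omega> \<and> x \<noteq> y \<and> \<not> gplus V adj \<Omega> S x y"

end

theory Submission
  imports Defs
begin



lemma graph_sym: "graph V adj \<Longrightarrow> adj x y \<Longrightarrow> adj y x" by (auto simp: graph_def)
lemma graph_irr: "graph V adj \<Longrightarrow> \<not> adj x x" by (auto simp: graph_def)
lemma graph_V: "graph V adj \<Longrightarrow> adj x y \<Longrightarrow> x \<in> V \<and> y \<in> V" by (auto simp: graph_def)

lemma reach_refl: "u \<in> A \<Longrightarrow> reach_in adj A u u" by (simp add: reach_in_def)

lemma reach_in_A: "reach_in adj A u v \<Longrightarrow> v \<in> A"
  unfolding reach_in_def
proof -
  assume a: "u \<in> A \<and> (\<lambda>x y. adj x y \<and> x \<in> A \<and> y \<in> A)\<^sup>*\<^sup>* u v"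
  then have "(\<lambda>x y. adj x y \<and> x \<in> A \<and> y \<in> A)\<^sup>*\<^sup>* u v" by simp
  then show "v \<in> A" using a by (induct rule: rtranclp_induct) auto
qed

lemma reach_step: "reach_in adj A u v \<Longrightarrow> adj v w \<Longrightarrow> w \<in> A \<Longrightarrow> reach_in adj A u w"
  unfolding reach_in_def using reach_in_A[of adj A u v]
  by (auto simp: reach_in_def intro: rtranclp.rtrancl_into_rtrancl)

lemma reach_trans: "reach_in adj A u v \<Longrightarrow> reach_in adj A v w \<Longrightarrow> reach_in adj A u w"
  unfolding reach_in_def by auto

lemma reach_sym: assumes "graph V adj" "reach_in adj A u v" shows "reach_in adj A v u"
proof -
  have r: "(\<lambda>x y. adj x y \<and> x \<in> A \<and> y \<in> A)\<^sup>*\<^sup>* u v" using assms(2) by (simp add: reach_in_def)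
  have "(\<lambda>x y. adj x y \<and> x \<in> A \<and> y \<in> A)\<^sup>*\<^sup>* v u" using r
  proof (induct rule: rtranclp_induct)
    case base then show ?case by simp
  next
    case (step y z)
    then have "(\<lambda>x y. adj x y \<and> x \<in> A \<and> y \<in> A) z y" using graph_sym[OF assms(1)] by auto
    then show ?case using step(3) by (rule converse_rtranclp_into_rtranclp)
  qed
  moreover have "v \<in> A" using reach_in_A[OF assms(2)] .
  ultimately show ?thesis by (simp add: reach_in_def)
qed

lemma reach_mono: "A \<subseteq> B \<Longrightarrow> reach_in adj A u v \<Longrightarrow> reach_in adj B u v"
  unfolding reach_in_def
proof -
  assume ab: "A \<subseteq> B" and a: "u \<in> A \<and> (\<lambda>x y. adj x y \<and> x \<in> A \<and> y \<in> A)\<^sup>*\<^sup>* u v"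
  have "(\<lambda>x y. adj x y \<and> x \<in> A \<and> y \<in> A)\<^sup>*\<^sup>* \<le> (\<lambda>x y. adj x y \<and> x \<in> B \<and> y \<in> B)\<^sup>*\<^sup>*"
    by (rule rtranclp_mono) (use ab in auto)
  then show "u \<in> B \<and> (\<lambda>x y. adj x y \<and> x \<in> B \<and> y \<in> B)\<^sup>*\<^sup>* u v" using a ab by blast
qed

lemma reach_exit:
  assumes "reach_in adj A s t" "s \<in> X" "t \<notin> X"
  shows "\<exists>p q. p \<in> X \<and> q \<notin> X \<and> p \<in> A \<and> q \<in> A \<and> adj p q"
proof -
  have r: "(\<lambda>x y. adj x y \<and> x \<in> A \<and> y \<in> A)\<^sup>*\<^sup>* s t" using assms(1) by (simp add: reach_in_def)
  show ?thesis using r assms(3)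
  proof (induct rule: rtranclp_induct)
    case base then show ?case using assms(2) by simp
  next
    case (step y z)
    then show ?case by (cases "y \<in> X") auto
  qed
qed

lemma comp_sub: "D \<in> components_in adj A \<Longrightarrow> D \<subseteq> A"
  unfolding components_in_def using reach_in_A by fastforce

lemma comp_of: "u \<in> A \<Longrightarrow> {v. reach_in adj A u v} \<in> components_in adj A \<and> u \<in> {v. reach_in adj A u v}"
  unfolding components_in_def by (auto intro: reach_refl)

lemma comp_eq: assumes "graph V adj" "D \<in> components_in adj A" "u \<in> D"
  shows "D = {v. reach_in adj A u v}"
proof -
  obtain u0 where u0: "u0 \<in> A" "D = {v. reach_in adj A u0 v}" using assms(2) unfolding components_in_def by blast
  have "reach_in adj A u0 u" using assms(3) u0 by simp
  then have "reach_in adj A u u0" using reach_sym[OF assms(1)] by blast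
  show ?thesis
  proof (rule set_eqI)
    fix v show "v \<in> D \<longleftrightarrow> v \<in> {v. reach_in adj A u v}"
      using u0 \<open>reach_in adj A u0 u\<close> \<open>reach_in adj A u u0\<close> reach_trans[of adj A u0 u v] reach_trans[of adj A u u0 v] by auto
  qed
qed

lemma comp_disj: "graph V adj \<Longrightarrow> D1 \<in> components_in adj A \<Longrightarrow> D2 \<in> components_in adj A
   \<Longrightarrow> u \<in> D1 \<Longrightarrow> u \<in> D2 \<Longrightarrow> D1 = D2"
  using comp_eq[of V adj D1 A u] comp_eq[of V adj D2 A u] by simp

lemma comp_closed: assumes "graph V adj" "D \<in> components_in adj A" "u \<in> D" "v \<in> A" "adj u v"
  shows "v \<in> D"
proof -
  have "D = {v. reach_in adj A u v}" using comp_eq[OF assms(1,2,3)] .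
  moreover have "u \<in> A" using comp_sub[OF assms(2)] assms(3) by blast
  then have "reach_in adj A u u" by (rule reach_refl)
  then have "reach_in adj A u v" using reach_step assms(4,5) by metis
  ultimately show ?thesis by simp
qed

lemma comp_conn: "graph V adj \<Longrightarrow> D \<in> components_in adj A \<Longrightarrow> u \<in> D \<Longrightarrow> v \<in> D \<Longrightarrow> reach_in adj A u v"
  using comp_eq[of V adj D A u] by simp

lemma setnbh_iff: "v \<in> setnbh V adj D \<longleftrightarrow> v \<in> V \<and> v \<notin> D \<and> (\<exists>d\<in>D. adj d v)"
  unfolding setnbh_def nbh_def by auto

lemma setnbh_sub: assumes "graph V adj" "D \<in> components_in adj (V - X)"
  shows "setnbh V adj D \<subseteq> X"
proof
  fix v assume "v \<in> setnbh V adj D"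
  then obtain d where "d \<in> D" "adj d v" "v \<in> V" "v \<notin> D" by (auto simp: setnbh_iff)
  then show "v \<in> X" using comp_closed[OF assms] by blast
qed



lemma aux: "(x::nat) < n \<Longrightarrow> y < n \<Longrightarrow> x \<le> y \<Longrightarrow> (m + x) mod n = (m + y) mod n \<Longrightarrow> x = y"
proof -
  assume a: "x < n" "y < n" "x \<le> y" "(m + x) mod n = (m + y) mod n"
  then have "n dvd (m + y) - (m + x)" using mod_eq_dvd_iff_nat[of "m+x" "m+y" n] by simp
  then have "n dvd y - x" by simp
  moreover have "y - x < n" using a by simp
  ultimately have "y - x = 0" using dvd_imp_le by (metis not_le zero_less_iff_neq_zero)
  then show ?thesis using a by simp
qed
lemma mod_inj_add: "(x::nat) < n \<Longrightarrow> y < n \<Longrightarrow> (m + x) mod n = (m + y) mod n \<Longrightarrow> x = y"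
  using aux[of x n y m] aux[of y n x m] by (cases "x \<le> y") auto
lemma cycle_rotate: assumes "is_cycle F vs" shows "is_cycle F (rotate m vs)"
proof -
  let ?n = "length vs"
  have n: "?n \<ge> 3" using assms by (simp add: is_cycle_def)
  have n0: "?n > 0" using n by linarith
  have "\<forall>i < ?n. F (rotate m vs ! i) (rotate m vs ! ((i + 1) mod ?n))"
  proof (intro allI impI)
    fix i assume i: "i < ?n"
    have "rotate m vs ! i = vs ! ((m + i) mod ?n)" using i by (simp add: nth_rotate)
    moreover have "rotate m vs ! ((i + 1) mod ?n) = vs ! ((m + (i+1) mod ?n) mod ?n)"
      using n0 by (simp add: nth_rotate)
    moreover have "(m + (i+1) mod ?n) mod ?n = (((m + i) mod ?n) + 1) mod ?n"
      by (metis add.assoc mod_add_left_eq mod_add_right_eq)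
    moreover have "(m + i) mod ?n < ?n" using n0 by simp
    ultimately show "F (rotate m vs ! i) (rotate m vs ! ((i + 1) mod ?n))"
      using assms unfolding is_cycle_def by auto
  qed
  then show ?thesis using assms by (simp add: is_cycle_def)
qed

lemma chord_rotate: assumes "is_cycle F vs" "has_chord F (rotate m vs)" shows "has_chord F vs"
proof -
  let ?n = "length vs"
  have n: "?n \<ge> 3" using assms by (simp add: is_cycle_def)
  have n0: "?n > 0" using n by linarith
  obtain i j where ij: "i < ?n" "j < ?n" "i \<noteq> j" "j \<noteq> (i + 1) mod ?n" "i \<noteq> (j + 1) mod ?n"
     "F (rotate m vs ! i) (rotate m vs ! j)" using assms(2) by (auto simp: has_chord_def)
  define i' where "i' = (m + i) mod ?n"
  define j' where "j' = (m + j) mod ?n"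
  have e: "(m + (k+1) mod ?n) mod ?n = (((m + k) mod ?n) + 1) mod ?n" for k
      by (metis add.assoc mod_add_left_eq mod_add_right_eq)
  have "i' < ?n" "j' < ?n" using n0 by (auto simp: i'_def j'_def)
  moreover have "i' \<noteq> j'" using ij mod_inj_add unfolding i'_def j'_def by blast
  moreover have "j' \<noteq> (i' + 1) mod ?n"
  proof
    assume "j' = (i' + 1) mod ?n"
    then have "(m + j) mod ?n = (m + (i+1) mod ?n) mod ?n" using e unfolding i'_def j'_def by simp
    then have "j = (i+1) mod ?n" using mod_inj_add ij n by (metis mod_less_divisor not_numeral_le_zero le0 less_le_trans zero_less_iff_neq_zero)
    then show False using ij by simp
  qed
  moreover have "i' \<noteq> (j' + 1) mod ?n"
  proof
    assume "i' = (j' + 1) mod ?n"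
    then have "(m + i) mod ?n = (m + (j+1) mod ?n) mod ?n" using e unfolding i'_def j'_def by simp
    then have "i = (j+1) mod ?n" using mod_inj_add ij n by (metis mod_less_divisor not_numeral_le_zero le0 less_le_trans zero_less_iff_neq_zero)
    then show False using ij by simp
  qed
  moreover have "F (vs ! i') (vs ! j')" using ij by (simp add: nth_rotate i'_def j'_def)
  ultimately show ?thesis unfolding has_chord_def by blast
qed



definition Fg :: "'a set \<Rightarrow> ('a \<Rightarrow> 'a \<Rightarrow> bool) \<Rightarrow> ('a \<Rightarrow> 'a \<Rightarrow> bool) \<Rightarrow> 'a set \<Rightarrow> 'a \<Rightarrow> 'a \<Rightarrow> 'a \<Rightarrow> 'a \<Rightarrow> bool" where
  "Fg V adj h \<Omega> a b x y \<longleftrightarrow> h x y \<and> {x, y} \<noteq> {a, b} \<and> ((x \<in> \<Omega> \<and> y \<in> \<Omega>) \<or>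
     (\<exists>D \<in> components_in adj (V - \<Omega>). x \<in> D \<union> setnbh V adj D \<and> y \<in> D \<union> setnbh V adj D))"

lemma Fg_sym: "graph V h \<Longrightarrow> Fg V adj h \<Omega> a b x y \<Longrightarrow> Fg V adj h \<Omega> a b y x"
  unfolding Fg_def by (auto simp: insert_commute dest: graph_sym)

lemma Fg_h: "Fg V adj h \<Omega> a b x y \<Longrightarrow> h x y" unfolding Fg_def by simp

lemma Fg_exit:
  assumes g: "graph V adj" and F: "Fg V adj h \<Omega> a b s t" and D: "D \<in> components_in adj (V - \<Omega>)"
    and s: "s \<in> D" and t: "t \<notin> D"
  shows "t \<in> setnbh V adj D"
proof -
  have "s \<notin> \<Omega>" using comp_sub[OF D] s by blast
  then obtain D' where D': "D' \<in> components_in adj (V - \<Omega>)" "s \<in> D' \<union> setnbh V adj D'" "t \<in> D' \<union> setnbh V adj D'"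
    using F unfolding Fg_def by blast
  have "s \<in> D'" using D' setnbh_sub[OF g D'(1)] \<open>s \<notin> \<Omega>\<close> by blast
  then have "D' = D" using comp_disj[OF g D'(1) D] s by blast
  then show ?thesis using D' t by blast
qed

lemma Fg_nbh:
  assumes "is_clique h \<Omega>" "graph V adj"
    and NB: "\<forall>D\<in>components_in adj (V - \<Omega>). \<not> (a \<in> setnbh V adj D \<and> b \<in> setnbh V adj D)"
    and D: "D \<in> components_in adj (V - \<Omega>)" and xy: "x \<in> setnbh V adj D" "y \<in> setnbh V adj D" "x \<noteq> y"
  shows "Fg V adj h \<Omega> a b x y"
proof -
  have "x \<in> \<Omega>" "y \<in> \<Omega>" using setnbh_sub[OF assms(2) D] xy by auto
  then have "h x y" using assms(1) xy unfolding is_clique_def by blast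
  moreover have "{x, y} \<noteq> {a, b}" using NB D xy by (auto simp: doubleton_eq_iff)
  ultimately show ?thesis unfolding Fg_def using \<open>x \<in> \<Omega>\<close> \<open>y \<in> \<Omega>\<close> by blast
qed



lemma Fg_chordal:
  assumes g: "graph V adj" and gh: "graph V h" and ch: "chordal V h" and OV: "\<Omega> \<subseteq> V"
    and cl: "is_clique h \<Omega>" and ab: "a \<in> \<Omega>" "b \<in> \<Omega>"
    and NB: "\<forall>D\<in>components_in adj (V - \<Omega>). \<not> (a \<in> setnbh V adj D \<and> b \<in> setnbh V adj D)"
  shows "chordal V (Fg V adj h \<Omega> a b)"
  unfolding chordal_def
proof (intro allI impI)
  let ?F = "Fg V adj h \<Omega> a b"
  fix vs assume sv: "set vs \<subseteq> V" and cyc: "is_cycle ?F vs" and l4: "4 \<le> length vs"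
  let ?n = "length vs"
  have ne: "vs \<noteq> []" using l4 by auto
  have dist: "distinct vs" using cyc by (simp add: is_cycle_def)
  have edge: "\<And>i. i < ?n \<Longrightarrow> ?F (vs ! i) (vs ! ((i + 1) mod ?n))" using cyc by (simp add: is_cycle_def)
  show "has_chord ?F vs"
  proof (cases "set vs \<subseteq> \<Omega>")
    case True
    have in\<Omega>: "\<And>i. i < ?n \<Longrightarrow> vs ! i \<in> \<Omega>" using True by auto
    have dc: "\<And>i j. i < ?n \<Longrightarrow> j < ?n \<Longrightarrow> i \<noteq> j \<Longrightarrow> vs ! i \<noteq> vs ! j"
      using dist unfolding distinct_conv_nth by blast
    have d02: "vs ! 0 \<noteq> vs ! 2" "vs ! 1 \<noteq> vs ! 3" "vs ! 0 \<noteq> vs ! 1" "vs ! 0 \<noteq> vs ! 3"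
      using dc[of 0 2] dc[of 1 3] dc[of 0 1] dc[of 0 3] l4 ne by (auto simp del: One_nat_def)
    have h02: "h (vs ! 0) (vs ! 2)" "h (vs ! 1) (vs ! 3)"
      using cl in\<Omega>[of 0] in\<Omega>[of 2] in\<Omega>[of 1] in\<Omega>[of 3] l4 ne d02 unfolding is_clique_def by auto
    show ?thesis
    proof (cases "{vs ! 0, vs ! 2} = {a, b}")
      case True
      then have "{vs ! 1, vs ! 3} \<noteq> {a, b}" using d02 by (auto simp: doubleton_eq_iff)
      moreover have "vs ! 1 \<in> \<Omega>" "vs ! 3 \<in> \<Omega>" using in\<Omega>[of 1] in\<Omega>[of 3] l4 by auto
      ultimately have "?F (vs ! 1) (vs ! 3)" using h02(2) unfolding Fg_def by blast
      moreover have "(3::nat) \<noteq> (1 + 1) mod ?n" using l4 by simp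
      moreover have "(1::nat) \<noteq> (3 + 1) mod ?n" using l4 by (cases "?n = 4") auto
      ultimately show ?thesis unfolding has_chord_def using l4
        by (intro exI[of _ 1] exI[of _ 3]) auto
    next
      case False
      moreover have "vs ! 0 \<in> \<Omega>" "vs ! 2 \<in> \<Omega>" using in\<Omega>[of 0] in\<Omega>[of 2] l4 ne by auto
      ultimately have "?F (vs ! 0) (vs ! 2)" using h02(1) unfolding Fg_def by blast
      moreover have "(2::nat) \<noteq> (0 + 1) mod ?n" "(0::nat) \<noteq> (2 + 1) mod ?n" using l4 by auto
      ultimately show ?thesis unfolding has_chord_def using l4
        by (intro exI[of _ 0] exI[of _ 2]) auto
    qed
  next
    case False
    then obtain u where u: "u \<in> set vs" "u \<notin> \<Omega>" by blast
    have uV: "u \<in> V - \<Omega>" using u sv by auto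
    define D where "D = {v. reach_in adj (V - \<Omega>) u v}"
    have D: "D \<in> components_in adj (V - \<Omega>)" "u \<in> D" using comp_of[OF uV] D_def by auto
    have ND\<Omega>: "setnbh V adj D \<subseteq> \<Omega>" using setnbh_sub[OF g D(1)] .
    have D\<Omega>: "D \<inter> \<Omega> = {}" using comp_sub[OF D(1)] by blast
    show ?thesis
    proof (cases "set vs \<subseteq> D \<union> setnbh V adj D")
      case True
      have "is_cycle h vs" using cyc Fg_h unfolding is_cycle_def by metis
      then have "has_chord h vs" using ch sv l4 unfolding chordal_def by blast
      then obtain i j where ij: "i < ?n" "j < ?n" "i \<noteq> j" "j \<noteq> (i + 1) mod ?n" "i \<noteq> (j + 1) mod ?n"
        "h (vs ! i) (vs ! j)" unfolding has_chord_def by blast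
      have inD: "vs ! i \<in> D \<union> setnbh V adj D" "vs ! j \<in> D \<union> setnbh V adj D" using True ij nth_mem[of i vs] nth_mem[of j vs] by blast+
      have "{vs ! i, vs ! j} \<noteq> {a, b}"
      proof
        assume e: "{vs ! i, vs ! j} = {a, b}"
        then have "a \<in> D \<union> setnbh V adj D" "b \<in> D \<union> setnbh V adj D" using inD by (auto simp: doubleton_eq_iff)
        then have "a \<in> setnbh V adj D" "b \<in> setnbh V adj D" using ab D\<Omega> by auto
        then show False using NB D(1) by blast
      qed
      then have "?F (vs ! i) (vs ! j)" using ij(6) inD D(1) unfolding Fg_def by blast
      then show ?thesis using ij unfolding has_chord_def by blast
    next
      case False
      then obtain w where w: "w \<in> set vs" "w \<notin> D \<union> setnbh V adj D" by blast
      obtain p where p: "p < ?n" "vs ! p = u" using u(1) by (metis in_set_conv_nth)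
      define ws where "ws = rotate p vs"
      have cw: "is_cycle ?F ws" using cycle_rotate[OF cyc] ws_def by simp
      have lw: "length ws = ?n" by (simp add: ws_def)
      have dw: "distinct ws" using dist by (simp add: ws_def)
      have ew: "\<And>i. i < ?n \<Longrightarrow> ?F (ws ! i) (ws ! ((i + 1) mod ?n))" using cw lw by (simp add: is_cycle_def)
      have w0: "ws ! 0 = u" using p l4 ne by (simp add: ws_def nth_rotate)
      obtain k where k: "k < ?n" "ws ! k = w" using w(1) lw by (metis in_set_conv_nth set_rotate ws_def)
      have kD: "ws ! k \<notin> D" "ws ! k \<notin> setnbh V adj D" using k w by auto
      have k0: "k \<noteq> 0" using kD w0 D(2) by (metis)
      obtain i where i: "ws ! i \<notin> D" "\<forall>m<i. ws ! m \<in> D"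
        using exists_least_iff[of "\<lambda>i. ws ! i \<notin> D"] kD by blast
      have ik: "i \<le> k" using i kD by (meson not_le)
      have i0: "i \<noteq> 0" using i w0 D(2) by (metis)
      have "?F (ws ! (i - 1)) (ws ! i)" using ew[of "i - 1"] i0 ik k by simp
      then have iN: "ws ! i \<in> setnbh V adj D" using Fg_exit[OF g _ D(1)] i i0 by (metis diff_less less_one not_gr_zero)
      then have ik': "i < k" using ik kD by (metis le_neq_implies_less)
      define J where "J = {j. j < ?n \<and> ws ! j \<notin> D}"
      have fJ: "finite J" unfolding J_def by simp
      have kJ: "k \<in> J" using k kD unfolding J_def by simp
      define j where "j = Max J"
      have jJ: "j \<in> J" using fJ kJ unfolding j_def by (metis Max_in empty_iff)
      have kj: "k \<le> j" using fJ kJ unfolding j_def by simp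
      have jmax: "\<And>m. j < m \<Longrightarrow> m < ?n \<Longrightarrow> ws ! m \<in> D"
        using fJ unfolding j_def J_def by (metis (mono_tags, lifting) Max_ge mem_Collect_eq not_le)
      have jN: "ws ! j \<in> setnbh V adj D"
      proof (cases "j + 1 = ?n")
        case True
        then have "?F (ws ! j) (ws ! 0)" using ew[of j] jJ unfolding J_def by simp
        then have "?F (ws ! 0) (ws ! j)" using Fg_sym gh by metis
        then show ?thesis using Fg_exit[OF g _ D(1)] w0 D(2) jJ unfolding J_def by blast
      next
        case False
        then have j1: "j + 1 < ?n" using jJ unfolding J_def by simp
        then have "?F (ws ! j) (ws ! (j + 1))" using ew[of j] by simp
        then have "?F (ws ! (j+1)) (ws ! j)" using Fg_sym gh by metis
        then show ?thesis using Fg_exit[OF g _ D(1)] jmax[of "j+1"] j1 jJ unfolding J_def by simp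
      qed
      have kj': "k < j" using kj jN kD by (metis le_neq_implies_less)
      have jn: "j < ?n" using jJ unfolding J_def by simp
      have neq: "ws ! i \<noteq> ws ! j" using dw ik' kj' jn lw by (simp add: nth_eq_iff_index_eq)
      have "?F (ws ! i) (ws ! j)" using Fg_nbh[OF cl g NB D(1) iN jN neq] .
      moreover have "j \<noteq> (i + 1) mod ?n" using ik' kj' jn by simp
      moreover have "i \<noteq> (j + 1) mod ?n"
      proof (cases "j + 1 = ?n")
        case True then show ?thesis using i0 by simp
      next
        case False then show ?thesis using jn ik' kj' by simp
      qed
      ultimately have "has_chord ?F ws" unfolding has_chord_def using ik' kj' jn lw
        by (intro exI[of _ i] exI[of _ j]) auto
      then show ?thesis using chord_rotate[OF cyc] ws_def by simp
    qed
  qed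
qed



lemma adj_in_F:
  assumes g: "graph V adj" and le: "adj \<le> h" and ab: "\<not> adj a b" "\<not> adj b a" and e: "adj x y"
  shows "Fg V adj h \<Omega> a b x y"
proof -
  have hxy: "h x y" using le e by (simp add: le_fun_def)
  have ne: "{x, y} \<noteq> {a, b}" using ab e by (auto simp: doubleton_eq_iff)
  have xyV: "x \<in> V" "y \<in> V" using graph_V[OF g e] by auto
  have yx: "adj y x" using graph_sym[OF g e] .
  have "(x \<in> \<Omega> \<and> y \<in> \<Omega>) \<or>
     (\<exists>D \<in> components_in adj (V - \<Omega>). x \<in> D \<union> setnbh V adj D \<and> y \<in> D \<union> setnbh V adj D)"
  proof (cases "x \<in> \<Omega>")
    case xO: True
    show ?thesis
    proof (cases "y \<in> \<Omega>")
      case True then show ?thesis using xO by blast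
    next
      case False
      then have yV: "y \<in> V - \<Omega>" using xyV by blast
      define D where "D = {v. reach_in adj (V - \<Omega>) y v}"
      have D: "D \<in> components_in adj (V - \<Omega>)" "y \<in> D" using comp_of[OF yV] D_def by auto
      have "x \<notin> D" using comp_sub[OF D(1)] xO by blast
      then have "x \<in> setnbh V adj D" unfolding setnbh_iff using xyV D(2) yx by blast
      then show ?thesis using D by blast
    qed
  next
    case False
    then have xV: "x \<in> V - \<Omega>" using xyV by blast
    define D where "D = {v. reach_in adj (V - \<Omega>) x v}"
    have D: "D \<in> components_in adj (V - \<Omega>)" "x \<in> D" using comp_of[OF xV] D_def by auto
    have "y \<in> D \<union> setnbh V adj D"
    proof (cases "y \<in> \<Omega>")
      case True
      then have "y \<notin> D" using comp_sub[OF D(1)] by blast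
      then have "y \<in> setnbh V adj D" unfolding setnbh_iff using xyV D(2) e by blast
      then show ?thesis by blast
    next
      case False
      then show ?thesis using comp_closed[OF g D(1) D(2) _ e] xyV by blast
    qed
    then show ?thesis using D by blast
  qed
  then show ?thesis unfolding Fg_def using hxy ne by blast
qed

lemma pmc_P1:
  assumes g: "graph V adj" and pmc: "potential_maximal_clique V adj \<Omega>"
    and ab: "a \<in> \<Omega>" "b \<in> \<Omega>" "a \<noteq> b" "\<not> adj a b"
  shows "\<exists>D\<in>components_in adj (V - \<Omega>). a \<in> setnbh V adj D \<and> b \<in> setnbh V adj D"
proof (rule ccontr)
  assume "\<not> ?thesis"
  then have NB: "\<forall>D\<in>components_in adj (V - \<Omega>). \<not> (a \<in> setnbh V adj D \<and> b \<in> setnbh V adj D)" by blast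
  obtain h where mt: "minimal_triangulation V adj h" and mc: "maximal_clique V h \<Omega>"
    using pmc unfolding potential_maximal_clique_def by blast
  have gh: "graph V h" and le: "adj \<le> h" and ch: "chordal V h"
    and min: "\<And>f. graph V f \<Longrightarrow> adj \<le> f \<Longrightarrow> f < h \<Longrightarrow> \<not> chordal V f"
    using mt unfolding minimal_triangulation_def by blast+
  have OV: "\<Omega> \<subseteq> V" and cl: "is_clique h \<Omega>" using mc unfolding maximal_clique_def by blast+
  let ?F = "Fg V adj h \<Omega> a b"
  have ba: "\<not> adj b a" using ab(4) graph_sym[OF g] by blast
  have gF: "graph V ?F"
    unfolding graph_def
  proof (intro conjI allI impI)
    show "finite V" using g by (simp add: graph_def)
  next
    fix x y assume "?F x y" then show "?F y x" using Fg_sym[OF gh] by blast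
  next
    fix x show "\<not> ?F x x" using Fg_h[of V adj h \<Omega> a b x x] graph_irr[OF gh, of x] by blast
  next
    fix x y assume "?F x y" then show "x \<in> V" using Fg_h[of V adj h \<Omega> a b x y] graph_V[OF gh, of x y] by blast
  next
    fix x y assume "?F x y" then show "y \<in> V" using Fg_h[of V adj h \<Omega> a b x y] graph_V[OF gh, of x y] by blast
  qed
  have leF: "adj \<le> ?F" using adj_in_F[OF g le ab(4) ba] by (simp add: le_fun_def)
  have Fh: "?F \<le> h" using Fg_h[of V adj h \<Omega> a b] by (simp add: le_fun_def)
  have "h a b" using cl ab unfolding is_clique_def by blast
  moreover have "\<not> ?F a b" unfolding Fg_def by simp
  ultimately have "?F < h" using Fh by (metis le_funD le_boolD less_le)
  moreover have "chordal V ?F" using Fg_chordal[OF g gh ch OV cl ab(1,2) NB] .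
  ultimately show False using min gF leF by blast
qed



lemma comp_reach_closed: "graph V adj \<Longrightarrow> C \<in> components_in adj A \<Longrightarrow> u \<in> C \<Longrightarrow> reach_in adj A u v \<Longrightarrow> v \<in> C"
  using comp_eq[of V adj C A u] by simp

lemma main_aux:
  fixes V :: "'a set" and adj :: "'a \<Rightarrow> 'a \<Rightarrow> bool"
    and W \<Omega> S C :: "'a set" and x y :: 'a
  assumes g: "graph V adj"
    and vc: "vertex_cover V adj W"
    and pmc: "potential_maximal_clique V adj \<Omega>"
    and as: "active_separator V adj \<Omega> S"
    and ap: "active_pair V adj \<Omega> S x y"
    and xS: "x \<in> S" and yS: "y \<in> S"
    and C: "C \<in> components_in adj (V - S)" and CO: "C \<inter> \<Omega> \<noteq> {}"
    and DS_def: "DS = \<Union>(components_in adj (V - S) - {C})"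
    and Dx_def: "Dx = \<Union>{D \<in> components_in adj (V - \<Omega>). D \<subseteq> C \<and> D \<inter> nbh V adj x \<noteq> {}}"
    and Dy_def: "Dy = \<Union>{D \<in> components_in adj (V - \<Omega>). D \<subseteq> C \<and> D \<inter> nbh V adj x = {}}"
    and n1: "\<not> (\<exists>t\<in>\<Omega>. \<Omega> - S = nbh V adj t \<inter> C)"
    and n2: "\<not> (\<exists>t\<in>\<Omega>. \<Omega> = cnbh V adj t)"
    and z: "z \<in> V - W"
  shows "z \<in> \<Omega> \<longleftrightarrow>
               ((nbh V adj z \<inter> (DS \<inter> W) \<noteq> {} \<and> nbh V adj z \<inter> (Dx \<inter> W \<union> Dy \<inter> W) \<noteq> {})
                \<or> (nbh V adj z \<inter> (DS \<inter> W) = {} \<and> nbh V adj z \<inter> (Dx \<inter> W \<union> {x}) \<noteq> {}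
                   \<and> nbh V adj z \<inter> (Dy \<inter> W \<union> {y}) \<noteq> {} \<and> nbh V adj z \<inter> (Dx \<inter> W \<union> Dy \<inter> W) \<noteq> {}))"
proof -
  let ?N = "nbh V adj"
  let ?CO = "components_in adj (V - \<Omega>)"
  let ?CS = "components_in adj (V - S)"
  have nbh_iff: "\<And>v u. u \<in> ?N v \<longleftrightarrow> u \<in> V \<and> adj v u" by (simp add: nbh_def)
  obtain C1 where C1: "C1 \<in> ?CO" "S = setnbh V adj C1" using as unfolding active_separator_def by blast
  have SO: "S \<subseteq> \<Omega>" using setnbh_sub[OF g C1(1)] C1(2) by simp
  have OV: "\<Omega> \<subseteq> V" using pmc unfolding potential_maximal_clique_def maximal_clique_def by blast
  have ngp: "\<not> gplus V adj \<Omega> S x y" "x \<noteq> y" using ap unfolding active_pair_def by blast+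
  have nxy: "\<not> adj x y" using ngp unfolding gplus_def by blast
  have nD: "\<And>D. D \<in> ?CO \<Longrightarrow> x \<in> setnbh V adj D \<Longrightarrow> y \<in> setnbh V adj D \<Longrightarrow> setnbh V adj D \<subseteq> S"
    using ngp unfolding gplus_def by blast
  have P1: "\<And>a b. a \<in> \<Omega> \<Longrightarrow> b \<in> \<Omega> \<Longrightarrow> a \<noteq> b \<Longrightarrow> \<not> adj a b \<Longrightarrow>
      \<exists>D\<in>?CO. a \<in> setnbh V adj D \<and> b \<in> setnbh V adj D"
    using pmc_P1[OF g pmc] by blast
  have sym: "\<And>u v. adj u v \<Longrightarrow> adj v u" using graph_sym[OF g] by blast
  have COsub: "\<And>D. D \<in> ?CO \<Longrightarrow> D \<subseteq> V - \<Omega>" using comp_sub by blast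
  have CSsub: "C \<subseteq> V - S" using comp_sub[OF C] .
  obtain w where w: "w \<in> C" "w \<in> \<Omega>" using CO by blast
  have wS: "w \<notin> S" using w CSsub by blast
  have OC: "\<Omega> - S \<subseteq> C"
  proof
    fix t assume t: "t \<in> \<Omega> - S"
    have wr: "reach_in adj (V - S) w w" by (rule reach_refl) (use w(1) CSsub in blast)
    show "t \<in> C"
    proof (cases "t = w")
      case True then show ?thesis using w by simp
    next
      case tw: False
      show ?thesis
      proof (cases "adj w t")
        case True
        then show ?thesis using comp_closed[OF g C w(1)] t OV by blast
      next
        case False
        then obtain D where D: "D \<in> ?CO" "w \<in> setnbh V adj D" "t \<in> setnbh V adj D"
          using P1[of w t] w t tw by (metis DiffE)
        obtain d1 where d1: "d1 \<in> D" "adj d1 w" using D(2) setnbh_iff by metis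
        obtain d2 where d2: "d2 \<in> D" "adj d2 t" using D(3) setnbh_iff by metis
        have d1C: "d1 \<in> C" using comp_closed[OF g C w(1), of d1] sym d1 COsub[OF D(1)] SO by blast
        have "reach_in adj (V - \<Omega>) d1 d2" using comp_conn[OF g D(1) d1(1) d2(1)] .
        then have "reach_in adj (V - S) d1 d2" using reach_mono[of "V - \<Omega>" "V - S"] SO by blast
        then have d2C: "d2 \<in> C" using comp_reach_closed[OF g C d1C] by blast
        then show ?thesis using comp_closed[OF g C d2C, of t] d2 t OV by blast
      qed
    qed
  qed
  have DC: "\<And>D u. D \<in> ?CO \<Longrightarrow> u \<in> D \<Longrightarrow> u \<in> C \<Longrightarrow> D \<subseteq> C"
  proof
    fix D u v assume D: "D \<in> ?CO" "u \<in> D" "u \<in> C" "v \<in> D"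
    have "reach_in adj (V - \<Omega>) u v" using comp_conn[OF g D(1) D(2) D(4)] .
    then have "reach_in adj (V - S) u v" using reach_mono[of "V - \<Omega>" "V - S"] SO by blast
    then show "v \<in> C" using comp_reach_closed[OF g C D(3)] by blast
  qed
  have DNC: "\<And>D t. D \<in> ?CO \<Longrightarrow> t \<in> setnbh V adj D \<Longrightarrow> t \<notin> S \<Longrightarrow> D \<subseteq> C"
  proof -
    fix D t assume D: "D \<in> ?CO" "t \<in> setnbh V adj D" "t \<notin> S"
    have tO: "t \<in> \<Omega>" using setnbh_sub[OF g D(1)] D(2) by blast
    then have tC: "t \<in> C" using OC D(3) by blast
    obtain d where d: "d \<in> D" "adj d t" using D(2) setnbh_iff by metis
    have "d \<in> C" using comp_closed[OF g C tC, of d] sym d COsub[OF D(1)] SO by blast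
    then show "D \<subseteq> C" using DC D(1) d(1) by blast
  qed
  have CN: "\<And>u v. u \<in> C \<Longrightarrow> v \<in> ?N u \<Longrightarrow> v \<notin> S \<Longrightarrow> v \<in> C"
    using comp_closed[OF g C] nbh_iff by blast
  have CDS: "\<And>u. u \<in> C \<Longrightarrow> u \<notin> DS"
    unfolding DS_def using comp_disj[OF g _ C] by blast
  have DSN: "\<And>u v. u \<in> DS \<Longrightarrow> v \<in> ?N u \<Longrightarrow> v \<notin> C"
  proof
    fix u v assume u: "u \<in> DS" "v \<in> ?N u" "v \<in> C"
    obtain C' where C': "C' \<in> ?CS" "C' \<noteq> C" "u \<in> C'" using u(1) unfolding DS_def by blast
    have "v \<notin> S" using u(3) CSsub by blast
    then have "v \<in> C'" using comp_closed[OF g C'(1) C'(3)] u(2) nbh_iff by blast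
    then show False using comp_disj[OF g C'(1) C] C'(2) u(3) by blast
  qed
  have Dxy: "\<And>u. u \<in> Dx \<union> Dy \<longleftrightarrow> (\<exists>D\<in>?CO. D \<subseteq> C \<and> u \<in> D)"
  proof
    fix u assume "u \<in> Dx \<union> Dy"
    then show "\<exists>D\<in>?CO. D \<subseteq> C \<and> u \<in> D" unfolding Dx_def Dy_def by auto
  next
    fix u assume "\<exists>D\<in>?CO. D \<subseteq> C \<and> u \<in> D"
    then obtain D where D: "D \<in> ?CO" "D \<subseteq> C" "u \<in> D" by blast
    show "u \<in> Dx \<union> Dy"
    proof (cases "D \<inter> ?N x = {}")
      case True
      then have "D \<subseteq> Dy" unfolding Dy_def using D by blast
      then show ?thesis using D(3) by blast
    next
      case False
      then have "D \<subseteq> Dx" unfolding Dx_def using D by blast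
      then show ?thesis using D(3) by blast
    qed
  qed
  have zV: "z \<in> V" "z \<notin> W" using z by auto
  have NW: "?N z \<subseteq> W" using vc zV unfolding vertex_cover_def nbh_def by blast
  have e1: "?N z \<inter> (DS \<inter> W) = ?N z \<inter> DS" using NW by blast
  have e2: "?N z \<inter> (Dx \<inter> W \<union> Dy \<inter> W) = ?N z \<inter> (Dx \<union> Dy)" using NW by blast
  have e3: "?N z \<inter> (Dx \<inter> W \<union> {x}) = ?N z \<inter> (Dx \<union> {x})" using NW by blast
  have e4: "?N z \<inter> (Dy \<inter> W \<union> {y}) = ?N z \<inter> (Dy \<union> {y})" using NW by blast
  have xV: "x \<in> V" "x \<in> \<Omega>" "y \<in> V" "y \<in> \<Omega>" using xS yS SO OV by auto
  have NDsub: "\<And>D. D \<in> ?CO \<Longrightarrow> setnbh V adj D \<subseteq> \<Omega>" using setnbh_sub[OF g] by blast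
  have nbD: "\<And>D v. D \<in> ?CO \<Longrightarrow> v \<in> setnbh V adj D \<Longrightarrow> \<exists>d\<in>D. d \<in> ?N v"
  proof -
    fix D v assume D: "D \<in> ?CO" "v \<in> setnbh V adj D"
    then obtain d where "d \<in> D" "adj d v" using setnbh_iff by metis
    moreover have "d \<in> V" using COsub[OF D(1)] \<open>d \<in> D\<close> by blast
    ultimately show "\<exists>d\<in>D. d \<in> ?N v" using sym nbh_iff by blast
  qed
  have toND: "\<And>D v d. D \<in> ?CO \<Longrightarrow> v \<in> \<Omega> \<Longrightarrow> d \<in> D \<Longrightarrow> d \<in> ?N v \<Longrightarrow> v \<in> setnbh V adj D"
  proof -
    fix D v d assume D: "D \<in> ?CO" "v \<in> \<Omega>" "d \<in> D" "d \<in> ?N v"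
    have "v \<notin> D" using COsub[OF D(1)] D(2) by blast
    moreover have "adj d v" using D(4) nbh_iff sym by blast
    ultimately show "v \<in> setnbh V adj D" unfolding setnbh_iff using D OV by blast
  qed
  have zNDS: "z \<in> C \<Longrightarrow> ?N z \<inter> DS = {}"
  proof -
    assume zC: "z \<in> C"
    { fix u assume u: "u \<in> ?N z" "u \<in> DS"
      have "z \<in> ?N u" using u(1) nbh_iff sym zV by blast
      then have False using DSN[OF u(2)] zC by blast }
    then show ?thesis by blast
  qed
  have key: "z \<in> \<Omega> \<longleftrightarrow> ((?N z \<inter> DS \<noteq> {} \<and> ?N z \<inter> (Dx \<union> Dy) \<noteq> {}) \<or>
     (?N z \<inter> DS = {} \<and> ?N z \<inter> (Dx \<union> {x}) \<noteq> {} \<and> ?N z \<inter> (Dy \<union> {y}) \<noteq> {} \<and> ?N z \<inter> (Dx \<union> Dy) \<noteq> {}))"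
  proof (cases "z \<in> \<Omega>")
    case zO: True
    show ?thesis
    proof (cases "z \<in> S")
      case zS: True
      obtain c where c: "c \<in> C1" "adj c z" using zS C1(2) setnbh_iff by metis
      have cV: "c \<in> V - \<Omega>" using COsub[OF C1(1)] c by blast
      have cN: "c \<in> ?N z" using c cV sym nbh_iff by blast
      have cVS: "c \<in> V - S" using cV SO by blast
      define C' where "C' = {v. reach_in adj (V - S) c v}"
      have C': "C' \<in> ?CS" "c \<in> C'" using comp_of[OF cVS] C'_def by auto
      have "C' \<noteq> C"
      proof
        assume "C' = C"
        then have "reach_in adj (V - S) c w" using comp_conn[OF g C _ w(1)] C'(2) by blast
        moreover have "w \<notin> C1" using COsub[OF C1(1)] w(2) by blast
        ultimately obtain p q where pq: "p \<in> C1" "q \<notin> C1" "q \<in> V - S" "adj p q"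
          using reach_exit[of adj "V - S" c w C1] c(1) by blast
        then have "q \<in> S" unfolding C1(2) setnbh_iff by blast
        then show False using pq by blast
      qed
      then have cDS: "c \<in> DS" unfolding DS_def using C' by blast
      have ne2: "?N z \<inter> (Dx \<union> Dy) \<noteq> {}"
      proof
        assume emp: "?N z \<inter> (Dx \<union> Dy) = {}"
        have noD: "\<And>D d. D \<in> ?CO \<Longrightarrow> D \<subseteq> C \<Longrightarrow> d \<in> D \<Longrightarrow> d \<in> ?N z \<Longrightarrow> False"
          using emp Dxy by blast
        have "\<Omega> - S = ?N z \<inter> C"
        proof
          show "\<Omega> - S \<subseteq> ?N z \<inter> C"
          proof
            fix t assume t: "t \<in> \<Omega> - S"
            have tC: "t \<in> C" using OC t by blast
            have tz: "t \<noteq> z" using t zS by blast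
            have "adj z t"
            proof (rule ccontr)
              assume "\<not> adj z t"
              then obtain D where D: "D \<in> ?CO" "z \<in> setnbh V adj D" "t \<in> setnbh V adj D"
                using P1[of z t] zO t tz by blast
              have "D \<subseteq> C" using DNC[OF D(1) D(3)] t by blast
              moreover obtain d where "d \<in> D" "d \<in> ?N z" using nbD[OF D(1) D(2)] by blast
              ultimately show False using noD D(1) by blast
            qed
            then show "t \<in> ?N z \<inter> C" using tC t OV nbh_iff by blast
          qed
        next
          show "?N z \<inter> C \<subseteq> \<Omega> - S"
          proof
            fix u assume u: "u \<in> ?N z \<inter> C"
            have uS: "u \<notin> S" using u CSsub by blast
            show "u \<in> \<Omega> - S"
            proof (rule ccontr)
              assume "u \<notin> \<Omega> - S"
              then have uVO: "u \<in> V - \<Omega>" using uS u nbh_iff by blast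
              define D where "D = {v. reach_in adj (V - \<Omega>) u v}"
              have D: "D \<in> ?CO" "u \<in> D" using comp_of[OF uVO] D_def by auto
              have "D \<subseteq> C" using DC[OF D(1) D(2)] u by blast
              then show False using noD[OF D(1) _ D(2)] u by blast
            qed
          qed
        qed
        then show False using n1 zO by blast
      qed
      have "?N z \<inter> DS \<noteq> {}" using cN cDS by blast
      then have A: "?N z \<inter> DS \<noteq> {} \<and> ?N z \<inter> (Dx \<union> Dy) \<noteq> {}" using ne2 by (rule conjI)
      show ?thesis using A zO by simp
    next
      case zS: False
      have zC: "z \<in> C" using OC zO zS by blast
      have e: "?N z \<inter> DS = {}" using zNDS zC by blast
      have hx: "?N z \<inter> (Dx \<union> {x}) \<noteq> {}"
      proof (cases "adj z x")
        case True then show ?thesis using xV nbh_iff by blast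
      next
        case False
        have "z \<noteq> x" using zS xS by blast
        then obtain D where D: "D \<in> ?CO" "z \<in> setnbh V adj D" "x \<in> setnbh V adj D"
          using P1[of z x] zO xV False by blast
        have DCC: "D \<subseteq> C" using DNC[OF D(1) D(2)] zS by blast
        have "D \<inter> ?N x \<noteq> {}" using nbD[OF D(1) D(3)] by blast
        then have "D \<subseteq> Dx" unfolding Dx_def using D(1) DCC by blast
        moreover obtain d where "d \<in> D" "d \<in> ?N z" using nbD[OF D(1) D(2)] by blast
        ultimately show ?thesis by blast
      qed
      have hy: "?N z \<inter> (Dy \<union> {y}) \<noteq> {}"
      proof (cases "adj z y")
        case True then show ?thesis using xV nbh_iff by blast
      next
        case False
        have "z \<noteq> y" using zS yS by blast
        then obtain D where D: "D \<in> ?CO" "z \<in> setnbh V adj D" "y \<in> setnbh V adj D"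
          using P1[of z y] zO xV False by blast
        have DCC: "D \<subseteq> C" using DNC[OF D(1) D(2)] zS by blast
        have "D \<inter> ?N x = {}"
        proof (rule ccontr)
          assume "D \<inter> ?N x \<noteq> {}"
          then obtain d where "d \<in> D" "d \<in> ?N x" by blast
          then have "x \<in> setnbh V adj D" using toND[OF D(1)] xV by blast
          then have "setnbh V adj D \<subseteq> S" using nD[OF D(1) _ D(3)] by blast
          then show False using D(2) zS by blast
        qed
        then have "D \<subseteq> Dy" unfolding Dy_def using D(1) DCC by blast
        moreover obtain d where "d \<in> D" "d \<in> ?N z" using nbD[OF D(1) D(2)] by blast
        ultimately show ?thesis by blast
      qed
      have hxy: "?N z \<inter> (Dx \<union> Dy) \<noteq> {}"
      proof
        assume emp: "?N z \<inter> (Dx \<union> Dy) = {}"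
        have noD: "\<And>D d. D \<in> ?CO \<Longrightarrow> D \<subseteq> C \<Longrightarrow> d \<in> D \<Longrightarrow> d \<in> ?N z \<Longrightarrow> False"
          using emp Dxy by blast
        have "\<Omega> = cnbh V adj z"
        proof
          show "\<Omega> \<subseteq> cnbh V adj z"
          proof
            fix t assume t: "t \<in> \<Omega>"
            show "t \<in> cnbh V adj z"
            proof (cases "t = z")
              case True then show ?thesis by (simp add: cnbh_def)
            next
              case tz: False
              have "adj z t"
              proof (rule ccontr)
                assume "\<not> adj z t"
                then obtain D where D: "D \<in> ?CO" "z \<in> setnbh V adj D" "t \<in> setnbh V adj D"
                  using P1[of z t] zO t tz by blast
                have "D \<subseteq> C" using DNC[OF D(1) D(2)] zS by blast
                moreover obtain d where "d \<in> D" "d \<in> ?N z" using nbD[OF D(1) D(2)] by blast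
                ultimately show False using noD D(1) by blast
              qed
              then show ?thesis using t OV nbh_iff unfolding cnbh_def by blast
            qed
          qed
        next
          show "cnbh V adj z \<subseteq> \<Omega>"
          proof
            fix u assume u: "u \<in> cnbh V adj z"
            show "u \<in> \<Omega>"
            proof (cases "u = z")
              case True then show ?thesis using zO by simp
            next
              case False
              then have uN: "u \<in> ?N z" using u unfolding cnbh_def by blast
              show ?thesis
              proof (rule ccontr)
                assume "u \<notin> \<Omega>"
                then have uVO: "u \<in> V - \<Omega>" using uN nbh_iff by blast
                have uC: "u \<in> C" using CN[OF zC uN] uVO SO by blast
                define D where "D = {v. reach_in adj (V - \<Omega>) u v}"
                have D: "D \<in> ?CO" "u \<in> D" using comp_of[OF uVO] D_def by auto
                have "D \<subseteq> C" using DC[OF D(1) D(2) uC] .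
                then show False using noD[OF D(1) _ D(2) uN] by blast
              qed
            qed
          qed
        qed
        then show False using n2 zO by blast
      qed
      show ?thesis using e hx hy hxy zO by simp
    qed
  next
    case zO: False
    have zVO: "z \<in> V - \<Omega>" using zV zO by blast
    have zVS: "z \<in> V - S" using zVO SO by blast
    define D0 where "D0 = {v. reach_in adj (V - \<Omega>) z v}"
    have D0: "D0 \<in> ?CO" "z \<in> D0" using comp_of[OF zVO] D0_def by auto
    show ?thesis
    proof (cases "z \<in> C")
      case zC: True
      have e: "?N z \<inter> DS = {}" using zNDS zC by blast
      have D0C: "D0 \<subseteq> C" using DC[OF D0 zC] .
      have nS: "\<not> setnbh V adj D0 \<subseteq> S"
      proof -
        have "reach_in adj (V - S) z w" using comp_conn[OF g C zC w(1)] .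
        moreover have "w \<notin> D0" using COsub[OF D0(1)] w(2) by blast
        ultimately obtain p q where pq: "p \<in> D0" "q \<notin> D0" "q \<in> V - S" "adj p q"
          using reach_exit[of adj "V - S" z w D0] D0(2) by blast
        then have "q \<in> setnbh V adj D0" unfolding setnbh_iff by blast
        then show ?thesis using pq(3) by blast
      qed
      have inD0: "\<And>u. u \<in> ?N z \<Longrightarrow> u \<notin> \<Omega> \<Longrightarrow> u \<in> D0"
        using comp_closed[OF g D0] nbh_iff by blast
      have notb: "\<not> (?N z \<inter> (Dx \<union> {x}) \<noteq> {} \<and> ?N z \<inter> (Dy \<union> {y}) \<noteq> {})"
      proof (cases "D0 \<inter> ?N x = {}")
        case True
        have "?N z \<inter> (Dx \<union> {x}) = {}"
        proof -
          { fix u assume u: "u \<in> ?N z" "u \<in> Dx"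
            then obtain D where D: "D \<in> ?CO" "D \<inter> ?N x \<noteq> {}" "u \<in> D" unfolding Dx_def by blast
            have "u \<notin> \<Omega>" using COsub[OF D(1)] D(3) by blast
            then have "u \<in> D0" using inD0 u by blast
            then have "D = D0" using comp_disj[OF g D(1) D0(1)] D(3) by blast
            then have False using D(2) True by blast }
          moreover have "x \<notin> ?N z"
          proof
            assume "x \<in> ?N z"
            then have "z \<in> ?N x" using nbh_iff sym zV by blast
            then show False using True D0(2) by blast
          qed
          ultimately show ?thesis by blast
        qed
        then show ?thesis by blast
      next
        case False
        have "?N z \<inter> (Dy \<union> {y}) = {}"
        proof -
          { fix u assume u: "u \<in> ?N z" "u \<in> Dy"
            then obtain D where D: "D \<in> ?CO" "D \<inter> ?N x = {}" "u \<in> D" unfolding Dy_def by blast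
            have "u \<notin> \<Omega>" using COsub[OF D(1)] D(3) by blast
            then have "u \<in> D0" using inD0 u by blast
            then have "D = D0" using comp_disj[OF g D(1) D0(1)] D(3) by blast
            then have False using D(2) False by blast }
          moreover have "y \<notin> ?N z"
          proof
            assume yN: "y \<in> ?N z"
            have "z \<in> ?N y" using yN nbh_iff sym zV by blast
            then have "y \<in> setnbh V adj D0" using toND[OF D0(1) xV(4) D0(2)] by blast
            moreover obtain d where d: "d \<in> D0" "d \<in> ?N x" using False by blast
            then have "x \<in> setnbh V adj D0" using toND[OF D0(1) xV(2) d(1) d(2)] by blast
            ultimately show False using nD[OF D0(1)] nS by blast
          qed
          ultimately show ?thesis by blast
        qed
        then show ?thesis by blast
      qed
      have nP: "\<not> (?N z \<inter> DS \<noteq> {} \<and> ?N z \<inter> (Dx \<union> Dy) \<noteq> {})" using e by simp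
      have nQ: "\<not> (?N z \<inter> DS = {} \<and> ?N z \<inter> (Dx \<union> {x}) \<noteq> {} \<and> ?N z \<inter> (Dy \<union> {y}) \<noteq> {} \<and> ?N z \<inter> (Dx \<union> Dy) \<noteq> {})"
        using notb by metis
      show ?thesis using nP nQ zO by metis
    next
      case zC: False
      define C' where "C' = {v. reach_in adj (V - S) z v}"
      have C': "C' \<in> ?CS" "z \<in> C'" using comp_of[OF zVS] C'_def by auto
      have "C' \<noteq> C" using C'(2) zC by blast
      then have zDS: "z \<in> DS" unfolding DS_def using C' by blast
      have "?N z \<inter> (Dx \<union> Dy) = {}"
      proof -
        { fix u assume u: "u \<in> ?N z" "u \<in> Dx \<union> Dy"
          then obtain D where "D \<in> ?CO" "D \<subseteq> C" "u \<in> D" using Dxy by blast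
          then have "u \<in> C" by blast
          then have False using DSN[OF zDS u(1)] by blast }
        then show ?thesis by blast
      qed
      then show ?thesis using zO by simp
    qed
  qed
  then show ?thesis unfolding e1 e2 e3 e4 .
qed

theorem lemma2:
  fixes V :: "'a set" and adj :: "'a \<Rightarrow> 'a \<Rightarrow> bool"
    and W \<Omega> S C :: "'a set" and x y :: 'a
  assumes "graph V adj"
    and "vertex_cover V adj W"
    and "potential_maximal_clique V adj \<Omega>"
    and "active_separator V adj \<Omega> S"
    and "active_pair V adj \<Omega> S x y"
    and "x \<in> S" and "y \<in> S"
    and "C \<in> components_in adj (V - S)" and "C \<inter> \<Omega> \<noteq> {}"
  shows "let N = nbh V adj;
             DS = \<Union>(components_in adj (V - S) - {C});
             Dx = \<Union>{D \<in> components_in adj (V - \<Omega>). D \<subseteq> C \<and> D \<inter> N x \<noteq> {}};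
             Dy = \<Union>{D \<in> components_in adj (V - \<Omega>). D \<subseteq> C \<and> D \<inter> N x = {}};
             DSW = DS \<inter> W; DxW = Dx \<inter> W; DyW = Dy \<inter> W
         in (\<exists>t\<in>\<Omega>. \<Omega> - S = N t \<inter> C)
          \<or> (\<exists>t\<in>\<Omega>. \<Omega> = cnbh V adj t)
          \<or> (\<forall>z \<in> V - W. z \<in> \<Omega> \<longleftrightarrow>
               ((N z \<inter> DSW \<noteq> {} \<and> N z \<inter> (DxW \<union> DyW) \<noteq> {})
                \<or> (N z \<inter> DSW = {} \<and> N z \<inter> (DxW \<union> {x}) \<noteq> {}
                   \<and> N z \<inter> (DyW \<union> {y}) \<noteq> {} \<and> N z \<inter> (DxW \<union> DyW) \<noteq> {})))"
  unfolding Let_def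
  apply (cases "\<exists>t\<in>\<Omega>. \<Omega> - S = nbh V adj t \<inter> C")
   apply (rule disjI1, assumption)
  apply (cases "\<exists>t\<in>\<Omega>. \<Omega> = cnbh V adj t")
   apply (rule disjI2, rule disjI1, assumption)
  apply (intro disjI2 ballI)
  apply (rule main_aux[OF assms refl refl refl])
    apply assumption+
  done

end
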